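(* Let $n$ be a positive integer, $\pi\in\mathrm{NC}_B(n)$ and $\psi(\pi)=(\sigma,x)$. Write $i\sim_\pi j$ if $i,j$ lie in the same block of $\pi$. Then: (1) $x=\emptyset$ if and only if there is no $i\in[\pm n]$ with $i\sim_\pi -i$ and there are no positive integers $i,j$ with $i\sim_\pi -j$; (2) $x$ is an edge if and only if there is no $i$ with $i\sim_\pi -i$ and there are positive integers $i,j$ with $i\sim_\pi -j$; in this case there is a unique pair $(a,b)$ of positive integers with $a<b$ such that $b-a$ is minimal subject to $a\sim_\pi -b$, this $(a,b)$ is an edge of $\sigma$, and $x=(a,b)$; (3) $x$ is a block if and only if there is an $i$ with $i\sim_\pi -i$; in this case $x$ is the block consisting of the positive integers $i$ with $i\sim_\pi -i$.
   Context: $[\pm n]=\{1,\dots,n,-1,\dots,-n\}$. A partition of type $B_n$ is a partition $\pi$ of $[\pm n]$ such that $-B$ is a block whenever $B$ is, with at most one block satisfying $B=-B$; it is noncrossing if, in the linear order $1<\cdots<n<-1<\cdots<-n$, there are no $a<b<c<d$ with $a,c$ in one block and $b,d$ in another. $\mathrm{NC}_B(n)$ is the set of these; $\mathrm{NC}(n)$ is the set of noncrossing partitions of $[n]$. An edge of $\sigma\in\mathrm{NC}(n)$ is a pair $(i,j)$, $i<j$, with $i,j$ in a common block containing no integer strictly between them. The map $\psi$: given $\pi\in\mathrm{NC}_B(n)$, let $\eta$ be obtained by deleting all negative integers from the blocks of $\pi$ (discarding empty sets), and let $X$ be the set of blocks $A$ of $\eta$ such that the block of $\pi$ containing $A$ also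 contains a negative integer. Write $X=\{A_1,\dots,A_m\}$ with $\max A_1<\cdots<\max A_m$. Let $\sigma$ be obtained from $\eta$ by merging $A_i$ and $A_{m+1-i}$ for $i=1,\dots,\lfloor m/2\rfloor$; $x=\emptyset$ if $m=0$, $x=(\max A_{m/2},\min A_{m/2+1})$ if $m>0$ is even, $x=A_{(m+1)/2}$ if $m$ is odd; $\psi(\pi)=(\sigma,x)$. *)

theory Defs
  imports Main
begin

definition pmset :: "nat \<Rightarrow> int set" where
  "pmset n = {i. i \<noteq> 0 \<and> - int n \<le> i \<and> i \<le> int n}"

definition is_partition :: "'a set \<Rightarrow> 'a set set \<Rightarrow> bool" where
  "is_partition S P \<longleftrightarrow> (\<forall>B\<in>P. B \<noteq> {} \<and> B \<subseteq> S) \<and> \<Union>P = S \<and>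
     (\<forall>B\<in>P. \<forall>C\<in>P. B \<noteq> C \<longrightarrow> B \<inter> C = {})"

definition noncrossing_wrt :: "('a \<Rightarrow> int) \<Rightarrow> 'a set set \<Rightarrow> bool" where
  "noncrossing_wrt r P \<longleftrightarrow> (\<forall>B\<in>P. \<forall>C\<in>P. B \<noteq> C \<longrightarrow>
     \<not> (\<exists>a b c d. a \<in> B \<and> c \<in> B \<and> b \<in> C \<and> d \<in> C \<and> r a < r b \<and> r b < r c \<and> r c < r d))"

text \<open>Position in the order 1 < ... < n < -1 < ... < -n.\<close>
definition posB :: "nat \<Rightarrow> int \<Rightarrow> int" where
  "posB n i = (if i > 0 then i else int n - i)"

definition NC_B :: "nat \<Rightarrow> int set set set" where
  "NC_B n = {\<pi>. is_partition (pmset n) \<pi> \<and> (\<forall>B\<in>\<pi>. uminus ` B \<in> \<pi>) \<and>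
      card {B\<in>\<pi>. uminus ` B = B} \<le> 1 \<and> noncrossing_wrt (posB n) \<pi>}"

definition NC :: "nat \<Rightarrow> int set set set" where
  "NC n = {\<sigma>. is_partition {1..int n} \<sigma> \<and> noncrossing_wrt id \<sigma>}"

definition is_edge :: "int set set \<Rightarrow> int \<Rightarrow> int \<Rightarrow> bool" where
  "is_edge \<sigma> i j \<longleftrightarrow> i < j \<and> (\<exists>B\<in>\<sigma>. i \<in> B \<and> j \<in> B \<and> (\<forall>k\<in>B. \<not> (i < k \<and> k < j)))"

datatype xval = XEmpty | XEdge int int | XBlock "int set"

definition sameblock :: "int set set \<Rightarrow> int \<Rightarrow> int \<Rightarrow> bool" where
  "sameblock \<pi> i j \<longleftrightarrow> (\<exists>B\<in>\<pi>. i \<in> B \<and> j \<in> B)"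

definition eta_of :: "int set set \<Rightarrow> int set set" where
  "eta_of \<pi> = {B \<inter> {0<..} | B. B \<in> \<pi> \<and> B \<inter> {0<..} \<noteq> {}}"

definition X_of :: "int set set \<Rightarrow> int set set" where
  "X_of \<pi> = {A \<in> eta_of \<pi>. \<exists>B\<in>\<pi>. A \<subseteq> B \<and> B \<inter> {..<0} \<noteq> {}}"

text \<open>The k-th element (1-indexed) of X ordered by increasing maxima.\<close>
definition Xenum :: "int set set \<Rightarrow> nat \<Rightarrow> int set" where
  "Xenum \<pi> k = (THE A. A \<in> X_of \<pi> \<and> card {A' \<in> X_of \<pi>. Max A' < Max A} = k - 1)"

definition psi :: "int set set \<Rightarrow> int set set \<times> xval" where
  "psi \<pi> = (let X = X_of \<pi>; m = card X; A = Xenum \<pi>;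
      \<sigma> = (eta_of \<pi> - X) \<union> {A i \<union> A (m + 1 - i) | i. 1 \<le> i \<and> i \<le> m div 2}
          \<union> (if odd m then {A ((m + 1) div 2)} else {});
      x = (if m = 0 then XEmpty
           else if even m then XEdge (Max (A (m div 2))) (Min (A (m div 2 + 1)))
           else XBlock (A ((m + 1) div 2)))
    in (\<sigma>, x))"

end

theory Submission imports Defs begin

lemma rank_bij:
  fixes f :: "'a \<Rightarrow> 'b::linorder"
  assumes fin: "finite X" and inj: "inj_on f X"
  shows "bij_betw (\<lambda>A. card {A'\<in>X. f A' < f A}) X {0..<card X}"
    and "\<And>A A'. A \<in> X \<Longrightarrow> A' \<in> X \<Longrightarrow> f A < f A' \<Longrightarrow>
           card {B\<in>X. f B < f A} < card {B\<in>X. f B < f A'}"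
proof -
  define r where "r = (\<lambda>A. card {A'\<in>X. f A' < f A})"
  have mono: "r A < r A'" if "A \<in> X" "A' \<in> X" "f A < f A'" for A A'
    unfolding r_def
    by (rule psubset_card_mono) (use fin that in auto)
  then show "\<And>A A'. A \<in> X \<Longrightarrow> A' \<in> X \<Longrightarrow> f A < f A' \<Longrightarrow>
           card {B\<in>X. f B < f A} < card {B\<in>X. f B < f A'}" unfolding r_def by blast
  have injr: "inj_on r X"
  proof (rule inj_onI)
    fix A A' assume h: "A \<in> X" "A' \<in> X" "r A = r A'"
    show "A = A'"
    proof (rule ccontr)
      assume "A \<noteq> A'"
      then have "f A \<noteq> f A'" using inj h by (meson inj_on_def)
      then show False using mono[of A A'] mono[of A' A] h by (metis linorder_neq_iff less_irrefl)
    qed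
  qed
  have lt: "r A < card X" if "A \<in> X" for A
  proof -
    have "{A'\<in>X. f A' < f A} \<subseteq> X - {A}" by auto
    then have "r A \<le> card (X - {A})" unfolding r_def using fin by (intro card_mono) auto
    also have "\<dots> < card X" using fin that by (meson card_Diff1_less)
    finally show ?thesis .
  qed
  have sub: "r ` X \<subseteq> {0..<card X}" using lt by auto
  have "card (r ` X) = card {0..<card X}" using injr by (simp add: card_image)
  then have "r ` X = {0..<card X}" using sub by (intro card_subset_eq) auto
  then show "bij_betw (\<lambda>A. card {A'\<in>X. f A' < f A}) X {0..<card X}"
    using injr unfolding r_def bij_betw_def by simp
qed

definition pp :: "int set \<Rightarrow> int set" where "pp B = B \<inter> {0<..}"
definition ltS :: "int set \<Rightarrow> int set \<Rightarrow> bool" where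
  "ltS A A' \<longleftrightarrow> (\<forall>a\<in>A. \<forall>a'\<in>A'. a < a')"

locale ncb =
  fixes n :: nat and \<pi> :: "int set set"
  assumes inNC: "\<pi> \<in> NC_B n"
begin

lemma part: "is_partition (pmset n) \<pi>" using inNC by (simp add: NC_B_def)
lemma symm: "B \<in> \<pi> \<Longrightarrow> uminus ` B \<in> \<pi>" using inNC by (simp add: NC_B_def)
lemma zero_card: "card {B\<in>\<pi>. uminus ` B = B} \<le> 1" using inNC by (simp add: NC_B_def)
lemma nonc: "noncrossing_wrt (posB n) \<pi>" using inNC by (simp add: NC_B_def)

lemma blk_sub: "B \<in> \<pi> \<Longrightarrow> B \<subseteq> pmset n" using part unfolding is_partition_def by blast
lemma blk_ne: "B \<in> \<pi> \<Longrightarrow> B \<noteq> {}" using part unfolding is_partition_def by blast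
lemma blk_disj: "B \<in> \<pi> \<Longrightarrow> B' \<in> \<pi> \<Longrightarrow> x \<in> B \<Longrightarrow> x \<in> B' \<Longrightarrow> B = B'"
  using part unfolding is_partition_def by blast
lemma in_pm: "x \<in> pmset n \<longleftrightarrow> x \<noteq> 0 \<and> - int n \<le> x \<and> x \<le> int n"
  by (simp add: pmset_def)
lemma fin_pm: "finite (pmset n)"
  by (rule finite_subset[of _ "{- int n..int n}"]) (auto simp: pmset_def)
lemma fin_pi: "finite \<pi>"
  by (rule finite_subset[of _ "Pow (pmset n)"]) (use blk_sub fin_pm in auto)
lemma fin_blk: "B \<in> \<pi> \<Longrightarrow> finite B" using blk_sub fin_pm finite_subset by blast

lemma selfneg: "B \<in> \<pi> \<Longrightarrow> i \<in> B \<Longrightarrow> - i \<in> B \<Longrightarrow> uminus ` B = B"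
  using blk_disj[of "uminus ` B" B "-i"] symm by auto

definition C where "C = {B\<in>\<pi>. pp B \<noteq> {} \<and> pp (uminus ` B) \<noteq> {}}"

lemma C_neg: "B \<in> C \<Longrightarrow> uminus ` B \<in> C"
  unfolding C_def using symm by (auto simp: image_image)

lemma X_eq: "X_of \<pi> = pp ` C"
proof
  show "X_of \<pi> \<subseteq> pp ` C"
  proof
    fix A assume "A \<in> X_of \<pi>"
    then obtain B B' where B: "B \<in> \<pi>" "A = pp B" "A \<noteq> {}" and B': "B' \<in> \<pi>" "A \<subseteq> B'" "B' \<inter> {..<0} \<noteq> {}"
      unfolding X_of_def eta_of_def pp_def by auto
    have "B = B'" using B B' blk_disj unfolding pp_def by blast
    then obtain c where "c \<in> B" "c < 0" using B' by auto
    then have "-c \<in> pp (uminus ` B)" unfolding pp_def by auto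
    then show "A \<in> pp ` C" using B unfolding C_def by blast
  qed
next
  show "pp ` C \<subseteq> X_of \<pi>"
  proof
    fix A assume "A \<in> pp ` C"
    then obtain B where B: "B \<in> \<pi>" "A = pp B" "pp B \<noteq> {}" "pp (uminus ` B) \<noteq> {}"
      unfolding C_def by auto
    then obtain c where "c \<in> B" "c < 0" unfolding pp_def by force
    then show "A \<in> X_of \<pi>" using B unfolding X_of_def eta_of_def pp_def by blast
  qed
qed


lemma posB_pos: "0 < i \<Longrightarrow> posB n i = i" by (simp add: posB_def)
lemma posB_neg: "0 < i \<Longrightarrow> posB n (-i) = int n + i" by (simp add: posB_def)

lemma C_in: "B \<in> C \<Longrightarrow> B \<in> \<pi>" unfolding C_def by auto
lemma pp_le: "B \<in> \<pi> \<Longrightarrow> a \<in> pp B \<Longrightarrow> 0 < a \<and> a \<le> int n \<and> a \<in> B"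
  using blk_sub unfolding pp_def pmset_def by auto
lemma ppn_le: "B \<in> \<pi> \<Longrightarrow> c \<in> pp (uminus ` B) \<Longrightarrow> 0 < c \<and> c \<le> int n \<and> -c \<in> B"
  using blk_sub unfolding pp_def pmset_def by force

lemma sep_aux:
  assumes B: "B \<in> C" "B' \<in> C" "B \<noteq> B'" and a: "a \<in> pp B" "a' \<in> pp B'" "a < a'"
    and c: "c \<in> pp (uminus ` B)" "d \<in> pp (uminus ` B')"
  shows "d < c"
proof (rule ccontr)
  assume "\<not> d < c"
  have Bp: "B \<in> \<pi>" "B' \<in> \<pi>" using B C_in by auto
  have a1: "0 < a" "a \<in> B" using pp_le[OF Bp(1) a(1)] by auto
  have a2: "0 < a'" "a' \<le> int n" "a' \<in> B'" using pp_le[OF Bp(2) a(2)] by auto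
  have c1: "0 < c" "-c \<in> B" using ppn_le[OF Bp(1) c(1)] by auto
  have d1: "0 < d" "-d \<in> B'" using ppn_le[OF Bp(2) c(2)] by auto
  have "c \<noteq> d" using blk_disj[OF Bp(1) Bp(2)] c1 d1 B(3) by auto
  then have cd: "c < d" using \<open>\<not> d < c\<close> by auto
  have "posB n a < posB n a'" "posB n a' < posB n (-c)" "posB n (-c) < posB n (-d)"
    using a1 a2 c1 d1 cd a(3) by (auto simp: posB_pos posB_neg)
  then have E: "\<exists>x y z w. x \<in> B \<and> z \<in> B \<and> y \<in> B' \<and> w \<in> B' \<and> posB n x < posB n y \<and> posB n y < posB n z \<and> posB n z < posB n w"
    using a1(2) c1(2) a2(3) d1(2) by (intro exI[of _ a] exI[of _ a'] exI[of _ "-c"] exI[of _ "-d"]) auto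
  have "\<not> (\<exists>x y z w. x \<in> B \<and> z \<in> B \<and> y \<in> B' \<and> w \<in> B' \<and> posB n x < posB n y \<and> posB n y < posB n z \<and> posB n z < posB n w)"
    using bspec[OF bspec[OF nonc[unfolded noncrossing_wrt_def] Bp(1)] Bp(2)] B(3) by (rule mp)
  then show False using E by blast
qed

lemma pp_ne_C: "B \<in> C \<Longrightarrow> pp B \<noteq> {}" unfolding C_def by auto
lemma ppn_ne_C: "B \<in> C \<Longrightarrow> pp (uminus ` B) \<noteq> {}" unfolding C_def by auto

lemma sep:
  assumes B: "B \<in> C" "B' \<in> C" "B \<noteq> B'"
  shows "ltS (pp B) (pp B') \<or> ltS (pp B') (pp B)"
proof (rule ccontr)
  assume H: "\<not> ?thesis"
  obtain c d where c: "c \<in> pp (uminus ` B)" "d \<in> pp (uminus ` B')" using ppn_ne_C B by blast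
  have Bp: "B \<in> \<pi>" "B' \<in> \<pi>" using B C_in by auto
  have neq: "a \<noteq> a'" if "a \<in> pp B" "a' \<in> pp B'" for a a'
    using blk_disj[OF Bp] that B(3) unfolding pp_def by auto
  from H obtain a a' where 1: "a \<in> pp B" "a' \<in> pp B'" "\<not> a < a'" unfolding ltS_def by auto
  from H obtain b b' where 2: "b \<in> pp B" "b' \<in> pp B'" "\<not> b' < b" unfolding ltS_def by auto
  have "c < d" using sep_aux[OF B(2) B(1) _ 1(2) 1(1) _ c(2) c(1)] 1 neq[OF 1(1,2)] B(3) by auto
  moreover have "d < c" using sep_aux[OF B 2(1) 2(2) _ c] 2 neq[OF 2(1,2)] by auto
  ultimately show False by simp
qed

lemma ltS_neq: "B \<in> C \<Longrightarrow> B' \<in> C \<Longrightarrow> ltS (pp B) (pp B') \<Longrightarrow> B \<noteq> B'"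
  using pp_ne_C unfolding ltS_def by fastforce

lemma sep_flip:
  assumes B: "B \<in> C" "B' \<in> C" and l: "ltS (pp B) (pp B')"
  shows "ltS (pp (uminus ` B')) (pp (uminus ` B))"
proof -
  have ne: "B \<noteq> B'" using ltS_neq B l .
  obtain a a' where "a \<in> pp B" "a' \<in> pp B'" using pp_ne_C B by blast
  then show ?thesis using sep_aux[OF B ne] l unfolding ltS_def by auto
qed

lemma pp_inj: "B \<in> C \<Longrightarrow> B' \<in> C \<Longrightarrow> pp B = pp B' \<Longrightarrow> B = B'"
  using pp_ne_C[of B] blk_disj[of B B'] C_in unfolding pp_def by blast

definition blk where "blk A = (THE B. B \<in> C \<and> pp B = A)"
lemma blk_pp: "B \<in> C \<Longrightarrow> blk (pp B) = B"
  unfolding blk_def by (rule the_equality) (auto dest: pp_inj)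

definition fl where "fl A = pp (uminus ` blk A)"
lemma fl_pp: "B \<in> C \<Longrightarrow> fl (pp B) = pp (uminus ` B)"
  unfolding fl_def by (simp add: blk_pp)

abbreviation "X \<equiv> X_of \<pi>"

lemma XE: "A \<in> X \<Longrightarrow> (\<And>B. B \<in> C \<Longrightarrow> A = pp B \<Longrightarrow> P) \<Longrightarrow> P"
  using X_eq by auto

lemma fl_X: "A \<in> X \<Longrightarrow> fl A \<in> X"
  by (erule XE) (use X_eq C_neg fl_pp in auto)
lemma fl_fl: "A \<in> X \<Longrightarrow> fl (fl A) = A"
  by (erule XE) (use C_neg fl_pp in \<open>auto simp: image_image\<close>)
lemma fl_lt: "A \<in> X \<Longrightarrow> A' \<in> X \<Longrightarrow> ltS A A' \<Longrightarrow> ltS (fl A') (fl A)"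
  by (erule XE, erule XE) (use sep_flip fl_pp in auto)
lemma X_fin: "A \<in> X \<Longrightarrow> finite A"
  by (erule XE) (use fin_blk C_in in \<open>auto simp: pp_def\<close>)
lemma X_ne: "A \<in> X \<Longrightarrow> A \<noteq> {}"
  by (erule XE) (use pp_ne_C in auto)
lemma X_tot: "A \<in> X \<Longrightarrow> A' \<in> X \<Longrightarrow> A \<noteq> A' \<Longrightarrow> ltS A A' \<or> ltS A' A"
  by (erule XE, erule XE) (use sep in auto)
lemma finX: "finite X"
  unfolding X_eq C_def using fin_pi by auto

lemma ltS_Max: "A \<in> X \<Longrightarrow> A' \<in> X \<Longrightarrow> ltS A A' \<Longrightarrow> Max A < Max A'"
  using X_fin X_ne Max_in unfolding ltS_def by blast
lemma Max_ltS: "A \<in> X \<Longrightarrow> A' \<in> X \<Longrightarrow> Max A < Max A' \<Longrightarrow> ltS A A'"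
  using X_tot ltS_Max by (metis less_asym less_irrefl)
lemma Max_inj: "inj_on Max X"
  by (rule inj_onI) (metis X_tot ltS_Max less_irrefl)


definition r where "r A = card {A'\<in>X. Max A' < Max A}"
abbreviation "m \<equiv> card X"
abbreviation "P \<equiv> Xenum \<pi>"

lemma r_bij: "bij_betw r X {0..<m}"
  unfolding r_def using rank_bij(1)[OF finX Max_inj] .
lemma r_mono: "A \<in> X \<Longrightarrow> A' \<in> X \<Longrightarrow> Max A < Max A' \<Longrightarrow> r A < r A'"
  unfolding r_def using rank_bij(2)[OF finX Max_inj] by blast
lemma r_inj: "A \<in> X \<Longrightarrow> A' \<in> X \<Longrightarrow> r A = r A' \<Longrightarrow> A = A'"
  using r_bij unfolding bij_betw_def inj_on_def by blast
lemma r_lt: "A \<in> X \<Longrightarrow> r A < m"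
  using r_bij unfolding bij_betw_def by auto

lemma P_eq: assumes "A \<in> X" "1 \<le> k" "r A = k - 1" shows "P k = A"
  unfolding Xenum_def
  by (rule the_equality) (use assms r_inj in \<open>auto simp: r_def[symmetric]\<close>)

lemma P_prop: assumes "1 \<le> k" "k \<le> m" shows "P k \<in> X" "r (P k) = k - 1"
proof -
  have "k - 1 \<in> r ` X" using r_bij assms unfolding bij_betw_def by auto
  then obtain A where A: "A \<in> X" "r A = k - 1" by auto
  then have "P k = A" using P_eq assms by blast
  then show "P k \<in> X" "r (P k) = k - 1" using A by auto
qed

lemma P_surj: "A \<in> X \<Longrightarrow> \<exists>k. 1 \<le> k \<and> k \<le> m \<and> A = P k"
  using P_eq[of A "r A + 1"] r_lt[of A] by (intro exI[of _ "r A + 1"]) auto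

lemma P_inj: assumes "1 \<le> k" "k \<le> m" "1 \<le> l" "l \<le> m" "P k = P l" shows "k = l"
proof -
  have "k - 1 = l - 1" using P_prop(2)[of k] P_prop(2)[of l] assms by metis
  then show ?thesis using assms by arith
qed

lemma P_lt: assumes "1 \<le> k" "k < l" "l \<le> m" shows "ltS (P k) (P l)"
proof -
  have in1: "P k \<in> X" "P l \<in> X" using P_prop assms by auto
  have rk: "r (P k) < r (P l)" using P_prop assms by auto
  have "Max (P k) < Max (P l)"
  proof (rule ccontr)
    assume "\<not> ?thesis"
    then have "Max (P l) < Max (P k) \<or> Max (P l) = Max (P k)" by auto
    then show False
    proof
      assume "Max (P l) < Max (P k)" then show False using r_mono[OF in1(2) in1(1)] rk by auto
    next
      assume "Max (P l) = Max (P k)" then have "P l = P k" using Max_inj in1 unfolding inj_on_def by blast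
      then show False using rk by simp
    qed
  qed
  then show ?thesis using Max_ltS in1 by blast
qed

lemma fl_inj: "inj_on fl X" by (metis fl_fl inj_onI)

lemma r_fl: assumes A: "A \<in> X" shows "r (fl A) = m - 1 - r A"
proof -
  define S1 where "S1 = {A'\<in>X. Max A' < Max A}"
  define S2 where "S2 = {A'\<in>X. Max A < Max A'}"
  have eq: "{A'\<in>X. Max A' < Max (fl A)} = fl ` S2"
  proof
    show "{A'\<in>X. Max A' < Max (fl A)} \<subseteq> fl ` S2"
    proof
      fix A' assume h: "A' \<in> {A'\<in>X. Max A' < Max (fl A)}"
      then have "ltS A' (fl A)" using Max_ltS fl_X A by auto
      then have "ltS (fl (fl A)) (fl A')" using fl_lt h fl_X A by auto
      then have "ltS A (fl A')" using fl_fl A by simp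
      then have "fl A' \<in> S2" unfolding S2_def using ltS_Max fl_X h A by auto
      moreover have "A' = fl (fl A')" using fl_fl h by auto
      ultimately show "A' \<in> fl ` S2" by blast
    qed
  next
    show "fl ` S2 \<subseteq> {A'\<in>X. Max A' < Max (fl A)}"
    proof
      fix A' assume "A' \<in> fl ` S2"
      then obtain A'' where h: "A'' \<in> X" "Max A < Max A''" "A' = fl A''" unfolding S2_def by auto
      then have "ltS A A''" using Max_ltS A by auto
      then have "ltS (fl A'') (fl A)" using fl_lt h A by auto
      then show "A' \<in> {A'\<in>X. Max A' < Max (fl A)}" using ltS_Max fl_X h A by auto
    qed
  qed
  have cfl: "card (fl ` S2) = card S2" using fl_inj by (rule card_image[OF inj_on_subset]) (auto simp: S2_def)
  have XU: "X = S1 \<union> {A} \<union> S2"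
  proof
    show "X \<subseteq> S1 \<union> {A} \<union> S2"
    proof
      fix A' assume A': "A' \<in> X"
      consider "Max A' < Max A" | "Max A' = Max A" | "Max A < Max A'" by fastforce
      then show "A' \<in> S1 \<union> {A} \<union> S2"
      proof cases
        case 2 then have "A' = A" using inj_onD[OF Max_inj] A A' by blast
        then show ?thesis by simp
      qed (use A' in \<open>auto simp: S1_def S2_def\<close>)
    qed
    show "S1 \<union> {A} \<union> S2 \<subseteq> X" using A by (auto simp: S1_def S2_def)
  qed
  have fS: "finite S1" "finite S2" using finX unfolding S1_def S2_def by auto
  have "card (S1 \<union> {A} \<union> S2) = card (S1 \<union> {A}) + card S2"
    using fS by (intro card_Un_disjoint) (auto simp: S1_def S2_def)
  moreover have "card (S1 \<union> {A}) = card S1 + 1"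
    using fS by (subst card_Un_disjoint) (auto simp: S1_def)
  ultimately have "m = card S1 + 1 + card S2" using XU by simp
  moreover have "r A = card S1" unfolding r_def S1_def ..
  ultimately show ?thesis unfolding r_def using eq cfl by simp
qed

lemma P_fl: assumes "1 \<le> k" "k \<le> m" shows "fl (P k) = P (m + 1 - k)"
proof -
  have "P k \<in> X" "r (P k) = k - 1" using P_prop assms by auto
  then show ?thesis using P_eq[of "fl (P k)" "m + 1 - k"] r_fl fl_X assms by auto
qed


lemma crossing: "B \<in> \<pi> \<Longrightarrow> 0 < i \<Longrightarrow> i \<in> B \<Longrightarrow> 0 < j \<Longrightarrow> -j \<in> B \<Longrightarrow>
   B \<in> C \<and> i \<in> pp B \<and> j \<in> pp (uminus ` B)"
  unfolding C_def pp_def by (auto intro!: image_eqI[of j uminus "-j"])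

lemma Cr_iff: "(\<exists>i j. 0 < i \<and> i \<le> int n \<and> 0 < j \<and> j \<le> int n \<and> sameblock \<pi> i (- j)) \<longleftrightarrow> m \<noteq> 0"
proof
  assume "\<exists>i j. 0 < i \<and> i \<le> int n \<and> 0 < j \<and> j \<le> int n \<and> sameblock \<pi> i (- j)"
  then obtain i j B where "0 < i" "0 < j" "B \<in> \<pi>" "i \<in> B" "-j \<in> B" unfolding sameblock_def by auto
  then have "B \<in> C" using crossing[of B i j] by blast
  then have "pp B \<in> X" using X_eq by auto
  then show "m \<noteq> 0" using finX by (auto simp: card_eq_0_iff)
next
  assume "m \<noteq> 0"
  then obtain A where "A \<in> X" by fastforce
  then obtain B where B: "B \<in> C" "A = pp B" by (erule XE)
  then obtain i j where "i \<in> pp B" "j \<in> pp (uminus ` B)" using pp_ne_C ppn_ne_C by blast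
  then have "0 < i" "i \<le> int n" "i \<in> B" "0 < j" "j \<le> int n" "-j \<in> B"
    using pp_le[OF C_in[OF B(1)]] ppn_le[OF C_in[OF B(1)]] by auto
  then show "\<exists>i j. 0 < i \<and> i \<le> int n \<and> 0 < j \<and> j \<le> int n \<and> sameblock \<pi> i (- j)"
    using C_in[OF B(1)] unfolding sameblock_def by blast
qed

lemma fixed_iff: "B \<in> C \<Longrightarrow> fl (pp B) = pp B \<longleftrightarrow> uminus ` B = B"
proof
  assume B: "B \<in> C" and "fl (pp B) = pp B"
  then have e: "pp (uminus ` B) = pp B" using fl_pp by simp
  obtain i where "i \<in> pp B" using pp_ne_C B by blast
  then have "i \<in> B" "-i \<in> B" using e ppn_le[of B i] C_in[OF B] by (auto simp: pp_def)
  then show "uminus ` B = B" using selfneg C_in[OF B] by blast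
next
  assume "B \<in> C" "uminus ` B = B" then show "fl (pp B) = pp B" using fl_pp by simp
qed

lemma P_fix: assumes "1 \<le> k" "k \<le> m" shows "fl (P k) = P k \<longleftrightarrow> m + 1 = 2 * k"
proof
  assume "fl (P k) = P k" then have "P (m + 1 - k) = P k" using P_fl assms by simp
  moreover have "1 \<le> m + 1 - k" "m + 1 - k \<le> m" using assms by arith+
  ultimately have "m + 1 - k = k" using P_inj[of "m + 1 - k" k] assms by blast
  then show "m + 1 = 2 * k" using assms by arith
next
  assume "m + 1 = 2 * k" then have "m + 1 - k = k" by arith
  then show "fl (P k) = P k" using P_fl assms by simp
qed

lemma zero_blocks_eq: assumes h: "B \<in> \<pi>" "B' \<in> \<pi>" "uminus ` B = B" "uminus ` B' = B'" shows "B = B'"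
proof -
  define S where "S = {B\<in>\<pi>. uminus ` B = B}"
  have fin: "finite S" using fin_pi unfolding S_def by auto
  have "card S \<le> Suc 0" using zero_card unfolding S_def by simp
  then have all: "\<forall>a\<in>S. \<forall>b\<in>S. a = b" using card_le_Suc0_iff_eq[OF fin] by blast
  have "B \<in> S" "B' \<in> S" using h unfolding S_def by auto
  then show "B = B'" using all by blast
qed

lemma Z_iff: "(\<exists>i\<in>pmset n. sameblock \<pi> i (- i)) \<longleftrightarrow> odd m"
proof
  assume "\<exists>i\<in>pmset n. sameblock \<pi> i (- i)"
  then obtain i B where i: "i \<in> pmset n" "B \<in> \<pi>" "i \<in> B" "-i \<in> B" unfolding sameblock_def by auto
  define j where "j = \<bar>i\<bar>"
  have "i \<noteq> 0" using i(1) unfolding pmset_def by auto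
  then have j: "0 < j" "j \<in> B" "-j \<in> B" using i(3,4) unfolding j_def by (cases "0 < i"; simp)+
  then have BC: "B \<in> C" using crossing i(2) by blast
  have s: "uminus ` B = B" using selfneg i by blast
  then have "fl (pp B) = pp B" using fixed_iff BC by blast
  moreover have "pp B \<in> X" using X_eq BC by auto
  then obtain k where k: "1 \<le> k" "k \<le> m" "pp B = P k" using P_surj by blast
  ultimately have "m + 1 = 2 * k" using P_fix by simp
  then show "odd m" by presburger
next
  assume "odd m"
  define k where "k = (m + 1) div 2"
  have k: "1 \<le> k" "k \<le> m" "m + 1 = 2 * k" using \<open>odd m\<close> unfolding k_def by (auto elim: oddE)
  then have "fl (P k) = P k" using P_fix by blast
  moreover obtain B where B: "B \<in> C" "P k = pp B" using P_prop(1)[OF k(1,2)] X_eq by auto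
  ultimately have s: "uminus ` B = B" using fixed_iff by simp
  obtain i where "i \<in> pp B" using pp_ne_C B by blast
  then have i: "i \<in> B" unfolding pp_def by auto
  have "-i \<in> uminus ` B" using i by (rule image_eqI[rotated]) simp
  then have "-i \<in> B" using s by simp
  moreover have "i \<in> pmset n" using i blk_sub C_in[OF B(1)] by blast
  ultimately have "i \<in> B" "-i \<in> B" "i \<in> pmset n" using i by auto
  then show "\<exists>i\<in>pmset n. sameblock \<pi> i (- i)" using C_in[OF B(1)] unfolding sameblock_def by blast
qed

lemma Blk: assumes "odd m" shows "P ((m + 1) div 2) = {i. 0 < i \<and> i \<le> int n \<and> sameblock \<pi> i (- i)}"
proof -
  define k where "k = (m + 1) div 2"
  have k: "1 \<le> k" "k \<le> m" "m + 1 = 2 * k" using \<open>odd m\<close> unfolding k_def by (auto elim: oddE)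
  then have "fl (P k) = P k" using P_fix by blast
  moreover obtain B where B: "B \<in> C" "P k = pp B" using P_prop(1)[OF k(1,2)] X_eq by auto
  ultimately have s: "uminus ` B = B" using fixed_iff by simp
  have Bp: "B \<in> \<pi>" using C_in B by auto
  have "pp B = {i. 0 < i \<and> i \<le> int n \<and> sameblock \<pi> i (- i)}"
  proof
    show "pp B \<subseteq> {i. 0 < i \<and> i \<le> int n \<and> sameblock \<pi> i (- i)}"
    proof
      fix i assume i: "i \<in> pp B"
      then have "-i \<in> B" using s by (force simp: pp_def)
      then show "i \<in> {i. 0 < i \<and> i \<le> int n \<and> sameblock \<pi> i (- i)}"
        using i pp_le[OF Bp i] Bp unfolding sameblock_def by auto
    qed
    show "{i. 0 < i \<and> i \<le> int n \<and> sameblock \<pi> i (- i)} \<subseteq> pp B"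
    proof
      fix i assume "i \<in> {i. 0 < i \<and> i \<le> int n \<and> sameblock \<pi> i (- i)}"
      then obtain B' where B': "0 < i" "B' \<in> \<pi>" "i \<in> B'" "-i \<in> B'" unfolding sameblock_def by auto
      then have "uminus ` B' = B'" using selfneg by blast
      then have "B' = B" using zero_blocks_eq B'(2) Bp s by blast
      then show "i \<in> pp B" using B' unfolding pp_def by auto
    qed
  qed
  then show ?thesis using B k_def by simp
qed


lemma P_basic: assumes "1 \<le> k" "k \<le> m" shows "P k \<noteq> {}" "finite (P k)" "\<And>a. a \<in> P k \<Longrightarrow> 0 < a \<and> a \<le> int n"
proof -
  have "P k \<in> X" using P_prop assms by auto
  then obtain B where B: "B \<in> C" "P k = pp B" using X_eq by auto
  show "P k \<noteq> {}" using B pp_ne_C by auto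
  show "finite (P k)" using B fin_blk C_in unfolding pp_def by auto
  show "\<And>a. a \<in> P k \<Longrightarrow> 0 < a \<and> a \<le> int n" using B pp_le C_in by blast
qed

lemma le_Max_P: assumes "1 \<le> k" "k \<le> l" "l \<le> m" "a \<in> P k" shows "a \<le> Max (P l)"
proof (cases "k = l")
  case True then show ?thesis using P_basic[of l] assms by simp
next
  case False
  then have "ltS (P k) (P l)" using P_lt assms by simp
  moreover have "Max (P l) \<in> P l" using P_basic[of l] assms by simp
  ultimately show ?thesis using assms(4) unfolding ltS_def by fastforce
qed

lemma Min_le_P: assumes "1 \<le> k" "k \<le> l" "l \<le> m" "b \<in> P l" shows "Min (P k) \<le> b"
proof (cases "k = l")
  case True then show ?thesis using P_basic[of l] assms by simp
next
  case False
  then have "ltS (P k) (P l)" using P_lt assms by simp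
  moreover have "Min (P k) \<in> P k" using P_basic[of k] assms by simp
  ultimately show ?thesis using assms(4) unfolding ltS_def by fastforce
qed

lemma edge_min:
  assumes ev: "even m" "m \<noteq> 0" and ab: "0 < a'" "a' < b'" "b' \<le> int n" "sameblock \<pi> a' (- b')"
  shows "a' \<le> Max (P (m div 2)) \<and> Min (P (m div 2 + 1)) \<le> b'"
proof -
  define h where "h = m div 2"
  have mh: "m = 2 * h" "1 \<le> h" using ev unfolding h_def by auto
  obtain B' where B': "B' \<in> \<pi>" "a' \<in> B'" "-b' \<in> B'" using ab(4) unfolding sameblock_def by auto
  have BC: "B' \<in> C" "a' \<in> pp B'" "b' \<in> pp (uminus ` B')" using crossing[OF B'(1) ab(1) B'(2) _ B'(3)] ab by auto
  have "pp B' \<in> X" using X_eq BC by auto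
  then obtain k where k: "1 \<le> k" "k \<le> m" "pp B' = P k" using P_surj by blast
  have "fl (P k) = pp (uminus ` B')" using fl_pp[OF BC(1)] k(3) by simp
  then have b'in: "b' \<in> P (m + 1 - k)" using P_fl k BC by simp
  have a'in: "a' \<in> P k" using k BC by simp
  show ?thesis
  proof (cases "k \<le> h")
    case True
    have "a' \<le> Max (P h)" using le_Max_P[OF k(1) True _ a'in] mh by simp
    moreover have "Min (P (h + 1)) \<le> b'" using Min_le_P[of "h + 1" "m + 1 - k" b'] b'in True mh k by simp
    ultimately show ?thesis unfolding h_def by simp
  next
    case False
    then have "ltS (P (m + 1 - k)) (P k)" using P_lt[of "m + 1 - k" k] mh k by simp
    then have "b' < a'" using a'in b'in unfolding ltS_def by blast
    then show ?thesis using ab by simp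
  qed
qed

lemma edge_pair:
  assumes ev: "even m" "m \<noteq> 0"
  shows "0 < Max (P (m div 2)) \<and> Max (P (m div 2)) < Min (P (m div 2 + 1)) \<and>
     Min (P (m div 2 + 1)) \<le> int n \<and> sameblock \<pi> (Max (P (m div 2))) (- Min (P (m div 2 + 1)))"
proof -
  define h where "h = m div 2"
  have mh: "m = 2 * h" "1 \<le> h" using ev unfolding h_def by auto
  define a0 where "a0 = Max (P h)"
  define b0 where "b0 = Min (P (h + 1))"
  have a0: "a0 \<in> P h" using P_basic[of h] mh unfolding a0_def by simp
  have b0: "b0 \<in> P (h + 1)" using P_basic[of "h + 1"] mh unfolding b0_def by simp
  have "ltS (P h) (P (h + 1))" using P_lt mh by simp
  then have lt: "a0 < b0" using a0 b0 unfolding ltS_def by blast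
  have "P h \<in> X" using P_prop mh by simp
  then obtain B where B: "B \<in> C" "P h = pp B" using X_eq by auto
  have "fl (P h) = P (h + 1)" using P_fl[of h] mh by simp
  then have "b0 \<in> pp (uminus ` B)" using b0 fl_pp B by simp
  then have "-b0 \<in> B" "b0 \<le> int n" using ppn_le C_in B by blast+
  moreover have "a0 \<in> B" "0 < a0" using a0 B unfolding pp_def by auto
  ultimately show ?thesis using lt C_in[OF B(1)] unfolding sameblock_def a0_def b0_def h_def by blast
qed

end

theorem lemma3p2:
  fixes n :: nat and \<pi> :: "int set set" and \<sigma> :: "int set set" and x :: xval
  assumes "n \<ge> 1" and "\<pi> \<in> NC_B n" and "psi \<pi> = (\<sigma>, x)"
  shows "(x = XEmpty \<longleftrightarrow>
           \<not> (\<exists>i\<in>pmset n. sameblock \<pi> i (- i)) \<and>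
           \<not> (\<exists>i j. 0 < i \<and> i \<le> int n \<and> 0 < j \<and> j \<le> int n \<and> sameblock \<pi> i (- j)))
       \<and> ((\<exists>a b. x = XEdge a b) \<longleftrightarrow>
           \<not> (\<exists>i\<in>pmset n. sameblock \<pi> i (- i)) \<and>
           (\<exists>i j. 0 < i \<and> i \<le> int n \<and> 0 < j \<and> j \<le> int n \<and> sameblock \<pi> i (- j)))
       \<and> ((\<exists>a b. x = XEdge a b) \<longrightarrow>
           (let minpair = (\<lambda>(a, b). 0 < a \<and> a < b \<and> b \<le> int n \<and> sameblock \<pi> a (- b) \<and>
                   (\<forall>a' b'. 0 < a' \<and> a' < b' \<and> b' \<le> int n \<and> sameblock \<pi> a' (- b')
                       \<longrightarrow> b - a \<le> b' - a'))
            in (\<exists>!p. minpair p) \<and>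
               (\<forall>a b. minpair (a, b) \<longrightarrow> is_edge \<sigma> a b \<and> x = XEdge a b)))
       \<and> ((\<exists>B. x = XBlock B) \<longleftrightarrow> (\<exists>i\<in>pmset n. sameblock \<pi> i (- i)))
       \<and> ((\<exists>B. x = XBlock B) \<longrightarrow>
           x = XBlock {i. 0 < i \<and> i \<le> int n \<and> sameblock \<pi> i (- i)})"
proof -
  interpret ncb n \<pi> using assms(2) by unfold_locales
  define m where "m = card (X_of \<pi>)"
  define A where "A = Xenum \<pi>"
  have x_eq: "x = (if m = 0 then XEmpty
           else if even m then XEdge (Max (A (m div 2))) (Min (A (m div 2 + 1)))
           else XBlock (A ((m + 1) div 2)))"
    using assms(3) unfolding psi_def Let_def m_def A_def by auto
  have s_eq: "\<sigma> = (eta_of \<pi> - X_of \<pi>) \<union> {A i \<union> A (m + 1 - i) | i. 1 \<le> i \<and> i \<le> m div 2}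
          \<union> (if odd m then {A ((m + 1) div 2)} else {})"
    using assms(3) unfolding psi_def Let_def m_def A_def by auto
  have Z: "(\<exists>i\<in>pmset n. sameblock \<pi> i (- i)) \<longleftrightarrow> odd m" using Z_iff unfolding m_def .
  have Cr: "(\<exists>i j. 0 < i \<and> i \<le> int n \<and> 0 < j \<and> j \<le> int n \<and> sameblock \<pi> i (- j)) \<longleftrightarrow> m \<noteq> 0"
    using Cr_iff unfolding m_def .
  have xE: "x = XEmpty \<longleftrightarrow> m = 0" using x_eq by auto
  have xEd: "(\<exists>a b. x = XEdge a b) \<longleftrightarrow> m \<noteq> 0 \<and> even m" using x_eq by auto
  have xB: "(\<exists>B. x = XBlock B) \<longleftrightarrow> odd m" using x_eq by auto
  have part1: "x = XEmpty \<longleftrightarrow>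
           \<not> (\<exists>i\<in>pmset n. sameblock \<pi> i (- i)) \<and>
           \<not> (\<exists>i j. 0 < i \<and> i \<le> int n \<and> 0 < j \<and> j \<le> int n \<and> sameblock \<pi> i (- j))"
    using xE Z Cr by auto
  have part2: "(\<exists>a b. x = XEdge a b) \<longleftrightarrow>
           \<not> (\<exists>i\<in>pmset n. sameblock \<pi> i (- i)) \<and>
           (\<exists>i j. 0 < i \<and> i \<le> int n \<and> 0 < j \<and> j \<le> int n \<and> sameblock \<pi> i (- j))"
    using xEd Z Cr by auto
  have part5: "(\<exists>B. x = XBlock B) \<longrightarrow> x = XBlock {i. 0 < i \<and> i \<le> int n \<and> sameblock \<pi> i (- i)}"
    using xB x_eq Blk unfolding m_def A_def by auto
  have part3: "(\<exists>a b. x = XEdge a b) \<longrightarrow>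
           (let minpair = (\<lambda>(a, b). 0 < a \<and> a < b \<and> b \<le> int n \<and> sameblock \<pi> a (- b) \<and>
                   (\<forall>a' b'. 0 < a' \<and> a' < b' \<and> b' \<le> int n \<and> sameblock \<pi> a' (- b')
                       \<longrightarrow> b - a \<le> b' - a'))
            in (\<exists>!p. minpair p) \<and>
               (\<forall>a b. minpair (a, b) \<longrightarrow> is_edge \<sigma> a b \<and> x = XEdge a b))"
  proof
    assume "\<exists>a b. x = XEdge a b"
    then have ev: "even m" "m \<noteq> 0" using xEd by auto
    define h where "h = m div 2"
    have mh: "m = 2 * h" "1 \<le> h" using ev unfolding h_def by auto
    define a0 where "a0 = Max (A h)"
    define b0 where "b0 = Min (A (h + 1))"
    have pr: "0 < a0" "a0 < b0" "b0 \<le> int n" "sameblock \<pi> a0 (- b0)"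
      using edge_pair ev unfolding a0_def b0_def h_def A_def m_def by auto
    have mn: "a' \<le> a0 \<and> b0 \<le> b'" if "0 < a'" "a' < b'" "b' \<le> int n" "sameblock \<pi> a' (- b')" for a' b'
      using edge_min[OF _ _ that] ev unfolding a0_def b0_def h_def A_def m_def by auto
    define minpair where "minpair = (\<lambda>(a, b). 0 < a \<and> a < b \<and> b \<le> int n \<and> sameblock \<pi> a (- b) \<and>
                   (\<forall>a' b'. 0 < a' \<and> a' < b' \<and> b' \<le> int n \<and> sameblock \<pi> a' (- b')
                       \<longrightarrow> b - a \<le> b' - a'))"
    have mp0: "minpair (a0, b0)" unfolding minpair_def using pr mn by fastforce
    have uniq: "p = (a0, b0)" if "minpair p" for p
    proof -
      obtain a b where p: "p = (a, b)" by (cases p)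
      have h1: "0 < a" "a < b" "b \<le> int n" "sameblock \<pi> a (- b)" "b - a \<le> b0 - a0"
        using that pr unfolding p minpair_def by auto
      have "a \<le> a0" "b0 \<le> b" using mn h1 by auto
      then show ?thesis using h1 p by auto
    qed
    have blkin: "A h \<union> A (h + 1) \<in> \<sigma>"
    proof -
      have "A h \<union> A (m + 1 - h) \<in> {A i \<union> A (m + 1 - i) | i. 1 \<le> i \<and> i \<le> m div 2}"
        using mh unfolding h_def by blast
      moreover have "m + 1 - h = h + 1" using mh by simp
      ultimately show ?thesis using s_eq by auto
    qed
    have edge: "is_edge \<sigma> a0 b0"
    proof -
      have hb: "1 \<le> h" "h + 1 \<le> m" using mh by auto
      have "a0 \<in> A h" "b0 \<in> A (h + 1)"
        using P_basic[of h] P_basic[of "h + 1"] hb unfolding a0_def b0_def A_def m_def by auto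
      moreover have "\<forall>k\<in>A h \<union> A (h + 1). \<not> (a0 < k \<and> k < b0)"
        using P_basic[of h] P_basic[of "h + 1"] hb unfolding a0_def b0_def A_def m_def by auto
      ultimately show ?thesis unfolding is_edge_def using pr blkin by blast
    qed
    have xe: "x = XEdge a0 b0" using x_eq ev unfolding a0_def b0_def h_def by simp
    show "let minpair = (\<lambda>(a, b). 0 < a \<and> a < b \<and> b \<le> int n \<and> sameblock \<pi> a (- b) \<and>
                   (\<forall>a' b'. 0 < a' \<and> a' < b' \<and> b' \<le> int n \<and> sameblock \<pi> a' (- b')
                       \<longrightarrow> b - a \<le> b' - a'))
            in (\<exists>!p. minpair p) \<and>
               (\<forall>a b. minpair (a, b) \<longrightarrow> is_edge \<sigma> a b \<and> x = XEdge a b)"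
      unfolding Let_def minpair_def[symmetric] using mp0 uniq edge xe by blast
  qed
  have part4: "(\<exists>B. x = XBlock B) \<longleftrightarrow> (\<exists>i\<in>pmset n. sameblock \<pi> i (- i))" using xB Z by simp
  show ?thesis using part1 part2 part3 part4 part5 by blast
qed

end
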